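(* Let $(X,d)$ be a compact metric space, $f_{0,\infty}=\{f_n\}_{n=0}^\infty$ a sequence of continuous self-maps of $X$, and $A\in\mathcal{S}$. For $k\ge1$ let $f^{(k)}_{0,\infty}=\{f_n\times\cdots\times f_n\ (k\text{ factors})\}_{n=0}^\infty$ acting on $X^k$ with the metric $d_k((x_i),(y_i))=\max_{1\le i\le k}d(x_i,y_i)$. Then \[h_A(f_{0,\infty}^{(k)})=k\,h_A(f_{0,\infty}),\quad k\geq1.\]
   Context: For a sequence $\{f_n\}$ of continuous self-maps of a compact metric space: $f_i^n=f_{i+n-1}\circ\cdots\circ f_i$, $f_i^0=\mathrm{id}$, $f_i^{-n}(B)=(f_i^n)^{-1}(B)$. $\mathcal S$ is the set of strictly increasing sequences $A=\{a_i\}_{i\ge1}$ of nonnegative integers. The topological sequence entropy along $A$ is $h_A(f_{0,\infty})=\sup_{\mathscr A}\limsup_{n\to\infty}\frac1n\log\mathcal N(\bigvee_{i=1}^n f_0^{-a_i}\mathscr A)$ over finite open covers $\mathscr A$, where $\bigvee$ is the common refinement $\{\bigcap_i U_i\}$, $f_0^{-a}\mathscr A=\{f_0^{-a}U:U\in\mathscr A\}$ and $\mathcal N$ the minimal cardinality of a subcover; values lie in $[0,\infty]$. *)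

theory Defs
  imports "HOL-Analysis.Analysis"
begin

fun nacomp :: "(nat \<Rightarrow> 'a \<Rightarrow> 'a) \<Rightarrow> nat \<Rightarrow> nat \<Rightarrow> 'a \<Rightarrow> 'a" where
  "nacomp f i 0 = id"
| "nacomp f i (Suc n) = f (i + n) \<circ> nacomp f i n"

definition finite_open_covers :: "'a topology \<Rightarrow> 'a set set set" where
  "finite_open_covers T =
     {C. finite C \<and> (\<forall>U\<in>C. openin T U) \<and> \<Union>C = topspace T}"

definition cover_preimage ::
  "'a topology \<Rightarrow> (nat \<Rightarrow> 'a \<Rightarrow> 'a) \<Rightarrow> nat \<Rightarrow> 'a set set \<Rightarrow> 'a set set" where
  "cover_preimage T f a C = (\<lambda>U. {x \<in> topspace T. nacomp f 0 a x \<in> U}) ` C"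

definition cover_join :: "'a topology \<Rightarrow> (nat \<Rightarrow> 'a set set) \<Rightarrow> nat \<Rightarrow> 'a set set" where
  "cover_join T C n =
     {topspace T \<inter> (\<Inter>i\<in>{1..n}. U i) | U. \<forall>i\<in>{1..n}. U i \<in> C i}"

definition min_subcover :: "'a topology \<Rightarrow> 'a set set \<Rightarrow> nat" where
  "min_subcover T C =
     (LEAST m. \<exists>S. S \<subseteq> C \<and> finite S \<and> card S = m \<and> topspace T \<subseteq> \<Union>S)"

text \<open>Topological sequence entropy along A = {a_i}_{i>=1}.\<close>
definition seq_entropy ::
  "'a topology \<Rightarrow> (nat \<Rightarrow> 'a \<Rightarrow> 'a) \<Rightarrow> (nat \<Rightarrow> nat) \<Rightarrow> ereal" where
  "seq_entropy T f a =
     (SUP C \<in> finite_open_covers T.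
        limsup (\<lambda>n. ereal (ln (real (min_subcover T
             (cover_join T (\<lambda>i. cover_preimage T f (a i) C) n))) / real n)))"

text \<open>The k-fold product system f_n x ... x f_n on X^k, points of X^k being
  extensional functions on {..<k}.\<close>
definition prod_maps :: "nat \<Rightarrow> (nat \<Rightarrow> 'a \<Rightarrow> 'a) \<Rightarrow> nat \<Rightarrow> (nat \<Rightarrow> 'a) \<Rightarrow> (nat \<Rightarrow> 'a)" where
  "prod_maps k f n x = restrict (\<lambda>i. f n (x i)) {..<k}"

end

theory Submission
  imports Defs
begin

definition NN where
  "NN T g a C n = min_subcover T (cover_join T (\<lambda>i. cover_preimage T g (a i) C) n)"

lemma ms_le:
  assumes "S \<subseteq> D" "finite S" "topspace T \<subseteq> \<Union>S"
  shows "min_subcover T D \<le> card S"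
  unfolding min_subcover_def by (rule Least_le) (use assms in blast)

lemma ms_ex:
  assumes "S \<subseteq> D" "finite S" "topspace T \<subseteq> \<Union>S"
  shows "\<exists>S'. S' \<subseteq> D \<and> finite S' \<and> card S' = min_subcover T D \<and> topspace T \<subseteq> \<Union>S'"
  unfolding min_subcover_def by (rule LeastI_ex) (use assms in blast)

lemma ms_ge:
  assumes "S \<subseteq> D" "finite S" "topspace T \<subseteq> \<Union>S" "E \<subseteq> topspace T"
    and uniq: "\<And>P x y. P \<in> D \<Longrightarrow> x \<in> E \<Longrightarrow> y \<in> E \<Longrightarrow> x \<in> P \<Longrightarrow> y \<in> P \<Longrightarrow> x = y"
  shows "card E \<le> min_subcover T D"
proof -
  obtain S' where S': "S' \<subseteq> D" "finite S'" "card S' = min_subcover T D" "topspace T \<subseteq> \<Union>S'"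
    using ms_ex[OF assms(1-3)] by blast
  define g where "g x = (SOME P. P \<in> S' \<and> x \<in> P)" for x
  have g: "g x \<in> S' \<and> x \<in> g x" if "x \<in> E" for x
    unfolding g_def by (rule someI_ex) (use that S'(4) assms(4) in blast)
  have "inj_on g E"
    by (rule inj_onI) (metis g S'(1) subsetD uniq)
  moreover have "g ` E \<subseteq> S'" using g by blast
  ultimately have "card E \<le> card S'" using card_inj_on_le S'(2) by blast
  then show ?thesis using S'(3) by simp
qed

lemma join_eq:
  "cover_join T C n = (\<lambda>U. topspace T \<inter> (\<Inter>i\<in>{1..n}. U i)) ` PiE {1..n} C"
proof
  show "cover_join T C n \<subseteq> (\<lambda>U. topspace T \<inter> (\<Inter>i\<in>{1..n}. U i)) ` PiE {1..n} C"
  proof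
    fix P assume "P \<in> cover_join T C n"
    then obtain U where U: "P = topspace T \<inter> (\<Inter>i\<in>{1..n}. U i)" "\<forall>i\<in>{1..n}. U i \<in> C i"
      unfolding cover_join_def by blast
    have "restrict U {1..n} \<in> PiE {1..n} C" using U(2) by auto
    moreover have "P = topspace T \<inter> (\<Inter>i\<in>{1..n}. restrict U {1..n} i)" using U(1) by auto
    ultimately show "P \<in> (\<lambda>U. topspace T \<inter> (\<Inter>i\<in>{1..n}. U i)) ` PiE {1..n} C" by blast
  qed
next
  show "(\<lambda>U. topspace T \<inter> (\<Inter>i\<in>{1..n}. U i)) ` PiE {1..n} C \<subseteq> cover_join T C n"
    unfolding cover_join_def by (auto simp: PiE_iff)
qed

lemma join_finite:
  assumes "\<And>i. i \<in> {1..n} \<Longrightarrow> finite (C i)"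
  shows "finite (cover_join T C n)"
  unfolding join_eq using assms by (intro finite_imageI finite_PiE) auto

lemma join_covers:
  assumes "\<And>i. i \<in> {1..n} \<Longrightarrow> topspace T \<subseteq> \<Union>(C i)"
  shows "topspace T \<subseteq> \<Union>(cover_join T C n)"
proof
  fix x assume x: "x \<in> topspace T"
  have "\<forall>i\<in>{1..n}. \<exists>V\<in>C i. x \<in> V" using assms x by blast
  then obtain U where U: "\<forall>i\<in>{1..n}. U i \<in> C i \<and> x \<in> U i" by metis
  then have "topspace T \<inter> (\<Inter>i\<in>{1..n}. U i) \<in> cover_join T C n"
    unfolding cover_join_def by blast
  moreover have "x \<in> topspace T \<inter> (\<Inter>i\<in>{1..n}. U i)" using U x by blast
  ultimately show "x \<in> \<Union>(cover_join T C n)" by blast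
qed

lemma NN_basic:
  assumes "finite C" "topspace T \<subseteq> \<Union>C"
    and maps: "\<And>m x. x \<in> topspace T \<Longrightarrow> nacomp g 0 m x \<in> topspace T"
  shows "finite (cover_join T (\<lambda>i. cover_preimage T g (a i) C) n)"
    "topspace T \<subseteq> \<Union>(cover_join T (\<lambda>i. cover_preimage T g (a i) C) n)"
proof -
  show "finite (cover_join T (\<lambda>i. cover_preimage T g (a i) C) n)"
    by (rule join_finite) (use assms(1) in \<open>auto simp: cover_preimage_def\<close>)
  show "topspace T \<subseteq> \<Union>(cover_join T (\<lambda>i. cover_preimage T g (a i) C) n)"
  proof (rule join_covers)
    fix i
    show "topspace T \<subseteq> \<Union>(cover_preimage T g (a i) C)"
    proof
      fix x assume x: "x \<in> topspace T"
      then obtain U where "U \<in> C" "nacomp g 0 (a i) x \<in> U" using maps assms(2) by blast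
      then show "x \<in> \<Union>(cover_preimage T g (a i) C)" using x unfolding cover_preimage_def by blast
    qed
  qed
qed

lemma join_elem:
  assumes "P \<in> cover_join T (\<lambda>i. cover_preimage T g (a i) C) n"
  shows "\<exists>U. (\<forall>i\<in>{1..n}. U i \<in> C) \<and>
           P = topspace T \<inter> (\<Inter>i\<in>{1..n}. {x \<in> topspace T. nacomp g 0 (a i) x \<in> U i})"
proof -
  obtain V where V: "P = topspace T \<inter> (\<Inter>i\<in>{1..n}. V i)"
     "\<forall>i\<in>{1..n}. V i \<in> cover_preimage T g (a i) C"
    using assms unfolding cover_join_def by blast
  then have "\<forall>i\<in>{1..n}. \<exists>U\<in>C. V i = {x \<in> topspace T. nacomp g 0 (a i) x \<in> U}"
    unfolding cover_preimage_def by blast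
  then obtain U where "\<forall>i\<in>{1..n}. U i \<in> C \<and> V i = {x \<in> topspace T. nacomp g 0 (a i) x \<in> U i}"
    by metis
  then show ?thesis using V(1) by (intro exI[of _ U]) auto
qed

lemma join_intro:
  assumes "\<And>i. i \<in> {1..n} \<Longrightarrow> U i \<in> C"
  shows "topspace T \<inter> (\<Inter>i\<in>{1..n}. {x \<in> topspace T. nacomp g 0 (a i) x \<in> U i})
          \<in> cover_join T (\<lambda>i. cover_preimage T g (a i) C) n"
  unfolding cover_join_def cover_preimage_def using assms by blast

lemma nacomp_in:
  assumes "\<And>n. f n ` X \<subseteq> X" "x \<in> X"
  shows "nacomp f i m x \<in> X"
  using assms by (induction m) auto

lemma nacomp_prod:
  assumes "x \<in> extensional {..<k}"
  shows "nacomp (prod_maps k f) i m x = restrict (\<lambda>j. nacomp f i m (x j)) {..<k}"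
proof (induction m)
  case 0
  then show ?case using assms by (simp add: extensional_restrict)
next
  case (Suc m)
  then show ?case by (auto simp: prod_maps_def restrict_def fun_eq_iff)
qed

lemma nacomp_prod_in:
  assumes "\<And>n. f n ` X \<subseteq> X" "x \<in> PiE {..<k} (\<lambda>_. X)"
  shows "nacomp (prod_maps k f) i m x \<in> PiE {..<k} (\<lambda>_. X)"
  using assms nacomp_in[OF assms(1)] by (auto simp: nacomp_prod PiE_iff)

definition sepd where
  "sepd X f a n \<delta> E \<longleftrightarrow> E \<subseteq> X \<and> (\<forall>x\<in>E. \<forall>y\<in>E. x \<noteq> y \<longrightarrow>
      (\<exists>i\<in>{1..n}. \<delta> \<le> dist (nacomp f 0 (a i) x) (nacomp f 0 (a i) y)))"

lemma foc_sub: "C \<in> finite_open_covers (top_of_set X) \<longleftrightarrow>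
   finite C \<and> (\<forall>U\<in>C. openin (top_of_set X) U) \<and> \<Union>C = X"
  by (simp add: finite_open_covers_def)

lemma sep_bound1:
  fixes X :: "'a::metric_space set"
  assumes fX: "\<And>n. f n ` X \<subseteq> X"
    and C: "C \<in> finite_open_covers (top_of_set X)"
    and small: "\<And>U x y. U \<in> C \<Longrightarrow> x \<in> U \<Longrightarrow> y \<in> U \<Longrightarrow> dist x y < \<delta>"
    and E: "sepd X f a n \<delta> E"
  shows "card E \<le> NN (top_of_set X) f a C n"
proof -
  let ?D = "cover_join (top_of_set X) (\<lambda>i. cover_preimage (top_of_set X) f (a i) C) n"
  have b: "finite ?D" "topspace (top_of_set X) \<subseteq> \<Union>?D"
    using NN_basic[of C "top_of_set X" f a n] C nacomp_in[OF fX] unfolding foc_sub by auto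
  show ?thesis unfolding NN_def
  proof (rule ms_ge[OF subset_refl b])
    show "E \<subseteq> topspace (top_of_set X)" using E by (simp add: sepd_def)
    fix P x y assume P: "P \<in> ?D" and xy: "x \<in> E" "y \<in> E" "x \<in> P" "y \<in> P"
    obtain U where U: "\<forall>i\<in>{1..n}. U i \<in> C"
      "P = X \<inter> (\<Inter>i\<in>{1..n}. {x \<in> X. nacomp f 0 (a i) x \<in> U i})"
      using join_elem[OF P] by auto
    show "x = y"
    proof (rule ccontr)
      assume "x \<noteq> y"
      then obtain i where i: "i \<in> {1..n}" "\<delta> \<le> dist (nacomp f 0 (a i) x) (nacomp f 0 (a i) y)"
        using E xy unfolding sepd_def by blast
      have "nacomp f 0 (a i) x \<in> U i" "nacomp f 0 (a i) y \<in> U i" using xy U i by auto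
      then show False using small U(1) i by fastforce
    qed
  qed
qed

definition pcov :: "nat \<Rightarrow> 'a set set \<Rightarrow> (nat \<Rightarrow> 'a) set set" where
  "pcov k C = (\<lambda>V. PiE {..<k} V) ` PiE {..<k} (\<lambda>_. C)"

lemma pcov_foc:
  assumes C: "C \<in> finite_open_covers (top_of_set X)"
  shows "pcov k C \<in> finite_open_covers (product_topology (\<lambda>i. top_of_set X) {..<k})"
  unfolding finite_open_covers_def
proof (intro CollectI conjI ballI)
  show "finite (pcov k C)" using C unfolding pcov_def foc_sub
    by (intro finite_imageI finite_PiE) (auto simp: finite_lessThan)
  fix W assume "W \<in> pcov k C"
  then obtain V where V: "V \<in> PiE {..<k} (\<lambda>_. C)" "W = PiE {..<k} V" unfolding pcov_def by blast
  show "openin (product_topology (\<lambda>i. top_of_set X) {..<k}) W"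
  proof -
    have "\<forall>i\<in>{..<k}. openin (top_of_set X) (V i)" using V(1) C unfolding foc_sub PiE_iff by blast
    moreover have "finite {i \<in> {..<k}. V i \<noteq> topspace (top_of_set X)}" by simp
    ultimately show ?thesis unfolding V(2) openin_PiE_gen by blast
  qed
next
  show "\<Union>(pcov k C) = topspace (product_topology (\<lambda>i. top_of_set X) {..<k})"
  proof
    show "\<Union>(pcov k C) \<subseteq> topspace (product_topology (\<lambda>i. top_of_set X) {..<k})"
    proof
      fix x assume "x \<in> \<Union>(pcov k C)"
      then obtain V where V: "V \<in> PiE {..<k} (\<lambda>_. C)" "x \<in> PiE {..<k} V" unfolding pcov_def by blast
      have "\<forall>j\<in>{..<k}. V j \<subseteq> X" using V(1) C unfolding foc_sub PiE_iff by blast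
      then have "PiE {..<k} V \<subseteq> PiE {..<k} (\<lambda>_. X)" by (intro PiE_mono) auto
      then show "x \<in> topspace (product_topology (\<lambda>i. top_of_set X) {..<k})" using V(2) by auto
    qed
    show "topspace (product_topology (\<lambda>i. top_of_set X) {..<k}) \<subseteq> \<Union>(pcov k C)"
    proof
      fix x assume "x \<in> topspace (product_topology (\<lambda>i. top_of_set X) {..<k})"
      then have x: "x \<in> PiE {..<k} (\<lambda>_. X)" by simp
      have "\<forall>j\<in>{..<k}. \<exists>U\<in>C. x j \<in> U" using x C unfolding foc_sub by (auto simp: PiE_iff)
      then obtain V where V: "\<forall>j\<in>{..<k}. V j \<in> C \<and> x j \<in> V j" by metis
      have "PiE {..<k} (restrict V {..<k}) \<in> pcov k C" unfolding pcov_def using V by auto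
      moreover have "x \<in> PiE {..<k} (restrict V {..<k})" using V x by (auto simp: PiE_iff)
      ultimately show "x \<in> \<Union>(pcov k C)" by blast
    qed
  qed
qed

lemma sep_boundk:
  fixes X :: "'a::metric_space set"
  assumes fX: "\<And>n. f n ` X \<subseteq> X"
    and C: "C \<in> finite_open_covers (top_of_set X)"
    and small: "\<And>U x y. U \<in> C \<Longrightarrow> x \<in> U \<Longrightarrow> y \<in> U \<Longrightarrow> dist x y < \<delta>"
    and E: "sepd X f a n \<delta> E" and fin: "finite E"
  shows "card E ^ k \<le> NN (product_topology (\<lambda>i. top_of_set X) {..<k}) (prod_maps k f) a (pcov k C) n"
proof -
  let ?T = "product_topology (\<lambda>i. top_of_set X) {..<k}"
  let ?D = "cover_join ?T (\<lambda>i. cover_preimage ?T (prod_maps k f) (a i) (pcov k C)) n"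
  have W: "pcov k C \<in> finite_open_covers ?T" by (rule pcov_foc[OF C])
  have W1: "finite (pcov k C)" "topspace ?T \<subseteq> \<Union>(pcov k C)"
    using W unfolding finite_open_covers_def by blast+
  have W2: "\<And>m x. x \<in> topspace ?T \<Longrightarrow> nacomp (prod_maps k f) 0 m x \<in> topspace ?T"
  proof -
    fix m x assume "x \<in> topspace ?T"
    then have "x \<in> PiE {..<k} (\<lambda>_. X)" by simp
    then have "nacomp (prod_maps k f) 0 m x \<in> PiE {..<k} (\<lambda>_. X)" by (rule nacomp_prod_in[OF fX])
    then show "nacomp (prod_maps k f) 0 m x \<in> topspace ?T" by simp
  qed
  have b: "finite ?D" "topspace ?T \<subseteq> \<Union>?D"
    using NN_basic[of "pcov k C" ?T "prod_maps k f" a n, OF W1 W2] by blast+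
  have "card (PiE {..<k} (\<lambda>_. E)) \<le> NN ?T (prod_maps k f) a (pcov k C) n"
    unfolding NN_def
  proof (rule ms_ge[OF subset_refl b])
    have "E \<subseteq> X" using E unfolding sepd_def by blast
    then show "PiE {..<k} (\<lambda>_. E) \<subseteq> topspace ?T" by (simp add: PiE_mono)
    fix P x y assume P: "P \<in> ?D" and xy: "x \<in> PiE {..<k} (\<lambda>_. E)" "y \<in> PiE {..<k} (\<lambda>_. E)" "x \<in> P" "y \<in> P"
    obtain U where U: "\<forall>i\<in>{1..n}. U i \<in> pcov k C"
      "P = topspace ?T \<inter> (\<Inter>i\<in>{1..n}. {x \<in> topspace ?T. nacomp (prod_maps k f) 0 (a i) x \<in> U i})"
      using join_elem[OF P] by blast
    have xyj: "x j = y j" if j: "j < k" for j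
    proof (rule ccontr)
      assume "x j \<noteq> y j"
      moreover have "x j \<in> E" "y j \<in> E" using PiE_mem[OF xy(1)] PiE_mem[OF xy(2)] j by simp_all
      ultimately obtain i where i: "i \<in> {1..n}" "\<delta> \<le> dist (nacomp f 0 (a i) (x j)) (nacomp f 0 (a i) (y j))"
        using E unfolding sepd_def by blast
      obtain V where V: "V \<in> PiE {..<k} (\<lambda>_. C)" "U i = PiE {..<k} V"
      proof -
        have "U i \<in> pcov k C" using U(1) i by blast
        then show ?thesis using that unfolding pcov_def by (elim imageE) simp
      qed
      have "nacomp (prod_maps k f) 0 (a i) x \<in> U i" "nacomp (prod_maps k f) 0 (a i) y \<in> U i"
      proof -
        have "x \<in> (\<Inter>i\<in>{1..n}. {x \<in> topspace ?T. nacomp (prod_maps k f) 0 (a i) x \<in> U i})"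
             "y \<in> (\<Inter>i\<in>{1..n}. {x \<in> topspace ?T. nacomp (prod_maps k f) 0 (a i) x \<in> U i})"
          using xy(3,4) unfolding U(2) by blast+
        then show "nacomp (prod_maps k f) 0 (a i) x \<in> U i" "nacomp (prod_maps k f) 0 (a i) y \<in> U i"
          using i by blast+
      qed
      moreover have "x \<in> extensional {..<k}" "y \<in> extensional {..<k}" using xy(1,2) PiE_iff by blast+
      ultimately have R: "restrict (\<lambda>j. nacomp f 0 (a i) (x j)) {..<k} \<in> PiE {..<k} V"
          "restrict (\<lambda>j. nacomp f 0 (a i) (y j)) {..<k} \<in> PiE {..<k} V"
        using V(2) by (simp_all add: nacomp_prod)
      have "nacomp f 0 (a i) (x j) \<in> V j" "nacomp f 0 (a i) (y j) \<in> V j"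
        using PiE_mem[OF R(1), of j] PiE_mem[OF R(2), of j] j by simp_all
      moreover have "V j \<in> C" using PiE_mem[OF V(1)] j by simp
      ultimately have "dist (nacomp f 0 (a i) (x j)) (nacomp f 0 (a i) (y j)) < \<delta>" using small by blast
      then show False using i by simp
    qed
    show "x = y" by (rule PiE_ext[OF xy(1) xy(2)]) (simp add: xyj)
  qed
  moreover have "card (PiE {..<k} (\<lambda>_. E)) = card E ^ k" by (simp add: card_PiE)
  ultimately show ?thesis by simp
qed

lemma span_bound:
  fixes X :: "'a::metric_space set"
  assumes fX: "\<And>n. f n ` X \<subseteq> X"
    and C: "C \<in> finite_open_covers (top_of_set X)"
    and leb: "\<And>y. y \<in> X \<Longrightarrow> \<exists>U\<in>C. ball y \<delta> \<inter> X \<subseteq> U"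
    and EX: "E \<subseteq> X" and fin: "finite E"
    and span: "\<And>x. x \<in> X \<Longrightarrow> \<exists>e\<in>E. \<forall>i\<in>{1..n}. dist (nacomp f 0 (a i) e) (nacomp f 0 (a i) x) < \<delta>"
  shows "NN (top_of_set X) f a C n \<le> card E"
proof -
  have FX: "\<And>x m. x \<in> X \<Longrightarrow> nacomp f 0 m x \<in> X" using nacomp_in[of f X] fX by blast
  define Uc where "Uc y = (SOME U. U \<in> C \<and> ball y \<delta> \<inter> X \<subseteq> U)" for y
  have Uc: "Uc y \<in> C \<and> ball y \<delta> \<inter> X \<subseteq> Uc y" if "y \<in> X" for y
    unfolding Uc_def by (rule someI_ex) (use leb[OF that] in blast)
  define Pe where "Pe e = topspace (top_of_set X) \<inter>
     (\<Inter>i\<in>{1..n}. {x \<in> topspace (top_of_set X). nacomp f 0 (a i) x \<in> Uc (nacomp f 0 (a i) e)})" for e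
  let ?D = "cover_join (top_of_set X) (\<lambda>i. cover_preimage (top_of_set X) f (a i) C) n"
  have "Pe ` E \<subseteq> ?D"
  proof
    fix P assume "P \<in> Pe ` E"
    then obtain e where e: "e \<in> E" "P = Pe e" by blast
    have "Uc (nacomp f 0 (a i) e) \<in> C" for i
      using Uc FX e EX by blast
    then show "P \<in> ?D" unfolding e(2) Pe_def by (rule join_intro)
  qed
  moreover have "finite (Pe ` E)" using fin by simp
  moreover have "topspace (top_of_set X) \<subseteq> \<Union>(Pe ` E)"
  proof
    fix x assume "x \<in> topspace (top_of_set X)"
    then have x: "x \<in> X" by simp
    obtain e where e: "e \<in> E" "\<forall>i\<in>{1..n}. dist (nacomp f 0 (a i) e) (nacomp f 0 (a i) x) < \<delta>"
      using span[OF x] by blast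
    have "nacomp f 0 (a i) x \<in> Uc (nacomp f 0 (a i) e)" if i: "i \<in> {1..n}" for i
    proof -
      have "nacomp f 0 (a i) e \<in> X" using FX e(1) EX by blast
      moreover have "nacomp f 0 (a i) x \<in> ball (nacomp f 0 (a i) e) \<delta> \<inter> X"
        using e(2) i FX[OF x] by simp
      ultimately show ?thesis using Uc by blast
    qed
    then have "x \<in> Pe e" unfolding Pe_def using x by simp
    then show "x \<in> \<Union>(Pe ` E)" using e(1) by blast
  qed
  ultimately have "NN (top_of_set X) f a C n \<le> card (Pe ` E)"
    unfolding NN_def by (rule ms_le)
  also have "\<dots> \<le> card E" by (rule card_image_le[OF fin])
  finally show ?thesis .
qed

lemma lower_main:
  fixes X :: "'a::metric_space set"
  assumes cX: "compact X" and fX: "\<And>n. f n ` X \<subseteq> X"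
    and C: "C \<in> finite_open_covers (top_of_set X)"
  shows "\<exists>W \<in> finite_open_covers (product_topology (\<lambda>i. top_of_set X) {..<k}).
     \<forall>n. NN (top_of_set X) f a C n ^ k \<le> NN (product_topology (\<lambda>i. top_of_set X) {..<k}) (prod_maps k f) a W n"
proof -
  define G where "G = {V. open V \<and> X \<inter> V \<in> C}"
  have "X \<subseteq> \<Union>G"
  proof
    fix x assume x: "x \<in> X"
    then obtain U where U: "U \<in> C" "x \<in> U" using C unfolding foc_sub by blast
    then obtain V where "open V" "U = X \<inter> V" using C unfolding foc_sub openin_open by blast
    then show "x \<in> \<Union>G" using U unfolding G_def by blast
  qed
  then obtain \<delta> :: real where d: "0 < \<delta>" "\<And>x. x \<in> X \<Longrightarrow> \<exists>V\<in>G. ball x \<delta> \<subseteq> V"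
    using Heine_Borel_lemma[OF cX, of G] unfolding G_def by blast
  have leb: "\<exists>U\<in>C. ball y \<delta> \<inter> X \<subseteq> U" if y: "y \<in> X" for y
  proof -
    obtain V where "V \<in> G" "ball y \<delta> \<subseteq> V" using d(2)[OF y] by blast
    then show ?thesis unfolding G_def by (intro bexI[of _ "X \<inter> V"]) auto
  qed
  obtain Fc where Fc: "Fc \<subseteq> X" "finite Fc" "X \<subseteq> (\<Union>c\<in>Fc. ball c (\<delta>/2))"
  proof (rule compactE_image[OF cX, of X "\<lambda>c. ball c (\<delta>/2)"])
    show "X \<subseteq> (\<Union>c\<in>X. ball c (\<delta>/2))" using d(1) by (auto intro!: bexI)
  qed auto
  define C' where "C' = (\<lambda>c. X \<inter> ball c (\<delta>/2)) ` Fc"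
  have C': "C' \<in> finite_open_covers (top_of_set X)"
    unfolding foc_sub
  proof (intro conjI ballI)
    show "finite C'" unfolding C'_def using Fc by simp
    show "openin (top_of_set X) U" if "U \<in> C'" for U
      using that unfolding C'_def openin_open by blast
    show "\<Union>C' = X" using Fc(3) unfolding C'_def by blast
  qed
  have small: "dist x y < \<delta>" if U: "U \<in> C'" "x \<in> U" "y \<in> U" for U x y
  proof -
    obtain c where "U = X \<inter> ball c (\<delta>/2)" using U(1) unfolding C'_def by blast
    then have "dist c x < \<delta>/2" "dist c y < \<delta>/2" using U by auto
    then show ?thesis using dist_triangle[of x y c] by (simp add: dist_commute)
  qed
  show ?thesis
  proof (intro bexI allI)
    show "pcov k C' \<in> finite_open_covers (product_topology (\<lambda>i. top_of_set X) {..<k})"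
      by (rule pcov_foc[OF C'])
    fix n
    define Q where "Q m = (\<exists>E. sepd X f a n \<delta> E \<and> finite E \<and> card E = m)" for m
    have Q0: "Q 0" unfolding Q_def sepd_def by (intro exI[of _ "{}"]) auto
    have Qb: "\<forall>m. Q m \<longrightarrow> m \<le> NN (top_of_set X) f a C' n"
    proof (intro allI impI)
      fix m assume "Q m"
      then obtain E where E: "sepd X f a n \<delta> E" "card E = m" unfolding Q_def by blast
      have "card E \<le> NN (top_of_set X) f a C' n"
        by (rule sep_bound1[where C=C' and \<delta>=\<delta>]) (fact fX, fact C', erule (2) small, fact E(1))
      then show "m \<le> NN (top_of_set X) f a C' n" using E(2) by simp
    qed
    obtain m where m: "Q m" "\<And>m'. Q m' \<Longrightarrow> m' \<le> m"
      using Nat.ex_has_greatest_nat[OF Q0 Qb] by blast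
    then obtain E where E: "sepd X f a n \<delta> E" "finite E" "card E = m" unfolding Q_def by blast
    have EX: "E \<subseteq> X" using E(1) unfolding sepd_def by blast
    have span: "\<exists>e\<in>E. \<forall>i\<in>{1..n}. dist (nacomp f 0 (a i) e) (nacomp f 0 (a i) x) < \<delta>" if x: "x \<in> X" for x
    proof (cases "x \<in> E")
      case True
      then show ?thesis using d(1) by (intro bexI[of _ x]) auto
    next
      case False
      show ?thesis
      proof (rule ccontr)
        assume H: "\<not> ?thesis"
        have "sepd X f a n \<delta> (insert x E)"
          unfolding sepd_def
        proof (intro conjI ballI impI)
          show "insert x E \<subseteq> X" using EX x by blast
          fix u v assume uv: "u \<in> insert x E" "v \<in> insert x E" "u \<noteq> v"
          show "\<exists>i\<in>{1..n}. \<delta> \<le> dist (nacomp f 0 (a i) u) (nacomp f 0 (a i) v)"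
          proof (cases "u = x")
            case True
            then have "v \<in> E" using uv by blast
            then show ?thesis using H True by (force simp: dist_commute not_less)
          next
            case ux: False
            show ?thesis
            proof (cases "v = x")
              case True
              then have "u \<in> E" using uv ux by blast
              then show ?thesis using H True by (force simp: not_less)
            next
              case False
              then show ?thesis using uv ux E(1) unfolding sepd_def by blast
            qed
          qed
        qed
        then have "Q (Suc m)" unfolding Q_def
          using E(2,3) False by (intro exI[of _ "insert x E"]) simp
        then show False using m(2) by fastforce
      qed
    qed
    have "NN (top_of_set X) f a C n \<le> card E"
      by (rule span_bound[of f X, OF fX C leb EX E(2) span])
    then have "NN (top_of_set X) f a C n ^ k \<le> card E ^ k" by (rule power_mono) simp
    also have "\<dots> \<le> NN (product_topology (\<lambda>i. top_of_set X) {..<k}) (prod_maps k f) a (pcov k C') n"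
      by (rule sep_boundk[where C=C' and \<delta>=\<delta>]) (fact fX, fact C', erule (2) small, fact E(1), fact E(2))
    finally show "NN (top_of_set X) f a C n ^ k \<le> NN (product_topology (\<lambda>i. top_of_set X) {..<k}) (prod_maps k f) a (pcov k C') n" .
  qed
qed

lemma small_cover:
  fixes X :: "'a::metric_space set" and k :: nat
  assumes cX: "compact X" and d: "0 < \<delta>"
  shows "\<exists>C \<in> finite_open_covers (top_of_set X). \<forall>U\<in>C. \<forall>x\<in>U. \<forall>y\<in>U. dist x y < \<delta>"
proof -
  obtain Fc where Fc: "Fc \<subseteq> X" "finite Fc" "X \<subseteq> (\<Union>c\<in>Fc. ball c (\<delta>/2))"
  proof (rule compactE_image[OF cX, of X "\<lambda>c. ball c (\<delta>/2)"])
    show "X \<subseteq> (\<Union>c\<in>X. ball c (\<delta>/2))" using d by (auto intro!: bexI)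
  qed auto
  define C' where "C' = (\<lambda>c. X \<inter> ball c (\<delta>/2)) ` Fc"
  have C': "C' \<in> finite_open_covers (top_of_set X)"
    unfolding foc_sub
  proof (intro conjI ballI)
    show "finite C'" unfolding C'_def using Fc by simp
    show "openin (top_of_set X) U" if "U \<in> C'" for U
      using that unfolding C'_def openin_open by blast
    show "\<Union>C' = X" using Fc(3) unfolding C'_def by blast
  qed
  have small: "dist x y < \<delta>" if U: "U \<in> C'" "x \<in> U" "y \<in> U" for U x y
  proof -
    obtain c where "U = X \<inter> ball c (\<delta>/2)" using U(1) unfolding C'_def by blast
    then have "dist c x < \<delta>/2" "dist c y < \<delta>/2" using U by auto
    then show ?thesis using dist_triangle[of x y c] by (simp add: dist_commute)
  qed
  show ?thesis using C' small by blast
qed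

lemma box_in_open:
  fixes X :: "'a::metric_space set" and k :: nat
  assumes w: "openin (product_topology (\<lambda>i. top_of_set X) {..<k}) w" and x: "x \<in> w" and k: "k \<ge> 1"
  shows "\<exists>r>0. PiE {..<k} (\<lambda>j. X \<inter> ball (x j) r) \<subseteq> w"
proof -
  have "\<exists>U. finite {i \<in> {..<k}. U i \<noteq> topspace (top_of_set X)} \<and>
                 (\<forall>i \<in> {..<k}. openin (top_of_set X) (U i)) \<and> x \<in> Pi\<^sub>E {..<k} U \<and> Pi\<^sub>E {..<k} U \<subseteq> w"
    using w x unfolding openin_product_topology_alt by (rule bspec)
  then obtain U where U: "\<forall>j\<in>{..<k}. openin (top_of_set X) (U j)" "x \<in> PiE {..<k} U" "PiE {..<k} U \<subseteq> w"
    by blast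
  have "\<forall>j\<in>{..<k}. \<exists>r>0. X \<inter> ball (x j) r \<subseteq> U j"
  proof
    fix j assume j: "j \<in> {..<k}"
    obtain Ob where Ob: "open Ob" "U j = X \<inter> Ob" using U(1) j unfolding openin_open by blast
    have "x j \<in> U j" using PiE_mem[OF U(2) j] .
    then have xO: "x j \<in> Ob" using Ob by blast
    obtain r where "r > 0" "ball (x j) r \<subseteq> Ob" by (rule openE[OF Ob(1) xO])
    then show "\<exists>r>0. X \<inter> ball (x j) r \<subseteq> U j" using Ob(2) by blast
  qed
  then obtain rr where rr: "\<forall>j\<in>{..<k}. rr j > 0 \<and> X \<inter> ball (x j) (rr j) \<subseteq> U j"
    by (rule bchoice[THEN exE]) blast
  define r where "r = Min (rr ` {..<k})"
  have "0 \<in> {..<k}" using k by simp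
  then have "{..<k} \<noteq> {}" by blast
  then have r0: "r > 0" unfolding r_def
  proof (subst Min_gr_iff)
    show "finite (rr ` {..<k})" by simp
    show "rr ` {..<k} \<noteq> {}" using \<open>{..<k} \<noteq> {}\<close> by blast
    show "\<forall>a\<in>rr ` {..<k}. 0 < a" using rr by blast
  qed
  have "PiE {..<k} (\<lambda>j. X \<inter> ball (x j) r) \<subseteq> PiE {..<k} U"
  proof (rule PiE_mono)
    fix j assume j: "j \<in> {..<k}"
    have "r \<le> rr j" unfolding r_def by (rule Min_le) (use j in auto)
    then have "X \<inter> ball (x j) r \<subseteq> X \<inter> ball (x j) (rr j)" by (intro Int_mono subset_refl subset_ball)
    then show "X \<inter> ball (x j) r \<subseteq> U j" using rr j by blast
  qed
  then show ?thesis by (intro exI[of _ r] conjI r0) (rule order_trans[OF _ U(3)])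
qed

lemma refine_exists:
  fixes X :: "'a::metric_space set" and k :: nat
  assumes cX: "compact X" and k: "k \<ge> 1"
    and W: "W \<in> finite_open_covers (product_topology (\<lambda>i. top_of_set X) {..<k})"
  shows "\<exists>C \<in> finite_open_covers (top_of_set X).
           \<forall>V \<in> PiE {..<k} (\<lambda>_. C). \<exists>w\<in>W. PiE {..<k} V \<subseteq> w"
proof (cases "X = {}")
  case True
  have "{} \<in> finite_open_covers (top_of_set X)" unfolding foc_sub using True by simp
  moreover have "PiE {..<k} (\<lambda>_. {}::'a set set) = {}"
  proof -
    have "0 \<in> {..<k}" using k by simp
    then show ?thesis unfolding PiE_eq_empty_iff by blast
  qed
  ultimately show ?thesis by (intro bexI[of _ "{}"]) auto
next
  case False
  let ?T = "product_topology (\<lambda>i. top_of_set X) {..<k}"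
  have TT: "topspace ?T = PiE {..<k} (\<lambda>_. X)" by simp
  have Wc: "\<Union>W = topspace ?T" "\<And>w. w \<in> W \<Longrightarrow> openin ?T w"
    using W unfolding finite_open_covers_def by blast+
  have "\<forall>x\<in>topspace ?T. \<exists>r. r > 0 \<and> (\<exists>w\<in>W. PiE {..<k} (\<lambda>j. X \<inter> ball (x j) r) \<subseteq> w)"
  proof
    fix x assume "x \<in> topspace ?T"
    then obtain w where "w \<in> W" "x \<in> w" using Wc(1) by blast
    then show "\<exists>r. r > 0 \<and> (\<exists>w\<in>W. PiE {..<k} (\<lambda>j. X \<inter> ball (x j) r) \<subseteq> w)"
    proof -
      obtain r where "r > 0" "PiE {..<k} (\<lambda>j. X \<inter> ball (x j) r) \<subseteq> w"
        using box_in_open[OF Wc(2)[OF \<open>w \<in> W\<close>] \<open>x \<in> w\<close> k] by blast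
      then show ?thesis using \<open>w \<in> W\<close> by blast
    qed
  qed
  then obtain R where R: "\<forall>x\<in>topspace ?T. R x > 0 \<and> (\<exists>w\<in>W. PiE {..<k} (\<lambda>j. X \<inter> ball (x j) (R x)) \<subseteq> w)"
    by (rule bchoice[THEN exE]) blast
  define Q where "Q x = PiE {..<k} (\<lambda>j. X \<inter> ball (x j) (R x / 2))" for x
  have Qo: "openin ?T (Q x)" for x
  proof -
    have "\<forall>j\<in>{..<k}. openin (top_of_set X) (X \<inter> ball (x j) (R x / 2))"
      unfolding openin_open by blast
    moreover have "finite {j \<in> {..<k}. X \<inter> ball (x j) (R x / 2) \<noteq> topspace (top_of_set X)}" by simp
    ultimately show ?thesis unfolding Q_def openin_PiE_gen by blast
  qed
  have Qx: "x \<in> Q x" if "x \<in> topspace ?T" for x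
  proof -
    have "R x > 0" using R that by blast
    have xP: "x \<in> PiE {..<k} (\<lambda>_. X)" using that unfolding TT .
    show ?thesis unfolding Q_def PiE_iff
    proof (intro conjI ballI)
      show "x \<in> extensional {..<k}" using xP PiE_iff by blast
      fix j assume j: "j \<in> {..<k}"
      have "x j \<in> X" using PiE_mem[OF xP j] .
      then show "x j \<in> X \<inter> ball (x j) (R x / 2)" using \<open>R x > 0\<close> by simp
    qed
  qed
  have "compact_space ?T"
    unfolding compact_space_product_topology
    using cX by (simp add: compact_space_subtopology)
  then have "compactin ?T (topspace ?T)" unfolding compact_space_def .
  moreover have "\<forall>U\<in>Q ` topspace ?T. openin ?T U" using Qo by blast
  moreover have "topspace ?T \<subseteq> \<Union>(Q ` topspace ?T)" using Qx by blast
  ultimately have "\<exists>F. finite F \<and> F \<subseteq> Q ` topspace ?T \<and> topspace ?T \<subseteq> \<Union>F"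
    unfolding compactin_def by blast
  then obtain F where F: "finite F" "F \<subseteq> Q ` topspace ?T" "topspace ?T \<subseteq> \<Union>F"
    by blast
  then obtain Fx where Fx: "Fx \<subseteq> topspace ?T" "finite Fx" "F = Q ` Fx"
    by (meson finite_subset_image)
  have "topspace ?T \<noteq> {}" using False unfolding TT PiE_eq_empty_iff by blast
  then have Fne: "Fx \<noteq> {}" using F(3) Fx(3) by auto
  define \<delta> where "\<delta> = Min (R ` Fx) / 2"
  have "Min (R ` Fx) > 0"
  proof (subst Min_gr_iff)
    show "finite (R ` Fx)" "R ` Fx \<noteq> {}" using Fx(2) Fne by auto
    show "\<forall>a\<in>R ` Fx. 0 < a" using Fx(1) R by blast
  qed
  then have d0: "\<delta> > 0" unfolding \<delta>_def by simp
  have dle: "\<delta> \<le> R x / 2" if "x \<in> Fx" for x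
    unfolding \<delta>_def using that Fx(2) by (simp add: Min_le)
  obtain C where C: "C \<in> finite_open_covers (top_of_set X)" "\<forall>U\<in>C. \<forall>x\<in>U. \<forall>y\<in>U. dist x y < \<delta>"
    using small_cover[OF cX d0] by blast
  have CX: "\<forall>U\<in>C. U \<subseteq> X" using C(1) unfolding foc_sub by blast
  have "\<forall>V \<in> PiE {..<k} (\<lambda>_. C). \<exists>w\<in>W. PiE {..<k} V \<subseteq> w"
  proof
    fix V assume V: "V \<in> PiE {..<k} (\<lambda>_. C)"
    show "\<exists>w\<in>W. PiE {..<k} V \<subseteq> w"
    proof (cases "PiE {..<k} V = {}")
      case True
      have "W \<noteq> {}" using Wc(1) \<open>topspace ?T \<noteq> {}\<close> by (metis Union_empty)
      then show ?thesis using True by blast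
    next
      case False
      then obtain y where y: "y \<in> PiE {..<k} V" by blast
      have VX: "PiE {..<k} V \<subseteq> topspace ?T"
        unfolding TT
      proof (rule PiE_mono)
        fix j assume j: "j \<in> {..<k}"
        show "V j \<subseteq> X" using PiE_mem[OF V j] CX by blast
      qed
      then have "y \<in> topspace ?T" using y by (rule subsetD)
      then have "y \<in> \<Union>(Q ` Fx)" using F(3) unfolding Fx(3) by (rule subsetD[rotated])
      then obtain x where x: "x \<in> Fx" "y \<in> Q x" by blast
      have xT: "x \<in> topspace ?T" using x(1) Fx(1) by blast
      obtain w where w: "w \<in> W" "PiE {..<k} (\<lambda>j. X \<inter> ball (x j) (R x)) \<subseteq> w"
        using bspec[OF R xT] by blast
      have "PiE {..<k} V \<subseteq> PiE {..<k} (\<lambda>j. X \<inter> ball (x j) (R x))"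
      proof
        fix z assume z: "z \<in> PiE {..<k} V"
        show "z \<in> PiE {..<k} (\<lambda>j. X \<inter> ball (x j) (R x))"
          unfolding PiE_iff
        proof (intro conjI ballI)
          show "z \<in> extensional {..<k}" using z PiE_iff by blast
          fix j assume j: "j \<in> {..<k}"
          have Vj: "V j \<in> C" using PiE_mem[OF V j] by simp
          have zy: "z j \<in> V j" "y j \<in> V j" using PiE_mem[OF z j] PiE_mem[OF y j] by simp_all
          then have d1: "dist (z j) (y j) < \<delta>" using C(2) Vj by blast
          have "y \<in> PiE {..<k} (\<lambda>j. X \<inter> ball (x j) (R x / 2))" using x(2) unfolding Q_def .
          from PiE_mem[OF this j] have "y j \<in> X \<inter> ball (x j) (R x / 2)" .
          then have d2: "dist (x j) (y j) < R x / 2" by simp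
          have "dist (x j) (z j) < R x"
            using dist_triangle[of "x j" "z j" "y j"] d1 d2 dle[OF x(1)] by (simp add: dist_commute)
          moreover have "z j \<in> X" using zy(1) Vj CX by blast
          ultimately show "z j \<in> X \<inter> ball (x j) (R x)" by simp
        qed
      qed
      then show ?thesis by (intro bexI[OF _ w(1)]) (rule order_trans[OF _ w(2)])
    qed
  qed
  then show ?thesis using C(1) by blast
qed

lemma upper_count:
  fixes X :: "'a::metric_space set" and k :: nat
  assumes fX: "\<And>n. f n ` X \<subseteq> X"
    and C: "C \<in> finite_open_covers (top_of_set X)"
    and ref: "\<forall>V \<in> PiE {..<k} (\<lambda>_. C). \<exists>w\<in>W. PiE {..<k} V \<subseteq> w"
  shows "NN (product_topology (\<lambda>i. top_of_set X) {..<k}) (prod_maps k f) a W n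
           \<le> NN (top_of_set X) f a C n ^ k"
proof -
  let ?X1 = "top_of_set X"
  let ?T = "product_topology (\<lambda>i. top_of_set X) {..<k}"
  let ?D1 = "cover_join ?X1 (\<lambda>i. cover_preimage ?X1 f (a i) C) n"
  let ?D = "cover_join ?T (\<lambda>i. cover_preimage ?T (prod_maps k f) (a i) W) n"
  have FX: "\<And>x m. x \<in> topspace ?X1 \<Longrightarrow> nacomp f 0 m x \<in> topspace ?X1"
    using nacomp_in[of f X] fX by simp
  have C1: "finite C" "topspace ?X1 \<subseteq> \<Union>C" using C unfolding foc_sub by simp_all
  have b1: "finite ?D1" "topspace ?X1 \<subseteq> \<Union>?D1"
    using NN_basic[of C ?X1 f a n, OF C1 FX] by blast+
  obtain S1 where S1: "S1 \<subseteq> ?D1" "finite S1" "card S1 = NN ?X1 f a C n" "topspace ?X1 \<subseteq> \<Union>S1"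
    using ms_ex[OF subset_refl b1] unfolding NN_def by blast
  define Ur where "Ur P = (SOME U. (\<forall>i\<in>{1..n}. U i \<in> C) \<and>
      P = topspace ?X1 \<inter> (\<Inter>i\<in>{1..n}. {x \<in> topspace ?X1. nacomp f 0 (a i) x \<in> U i}))" for P
  have Ur: "(\<forall>i\<in>{1..n}. Ur P i \<in> C) \<and>
      P = topspace ?X1 \<inter> (\<Inter>i\<in>{1..n}. {x \<in> topspace ?X1. nacomp f 0 (a i) x \<in> Ur P i})"
    if "P \<in> S1" for P
  proof -
    have "P \<in> ?D1" using that S1(1) by blast
    from someI_ex[OF join_elem[OF this]] show ?thesis unfolding Ur_def .
  qed
  define wsel where "wsel \<sigma> i = (SOME w. w \<in> W \<and> PiE {..<k} (restrict (\<lambda>j. Ur (\<sigma> j) i) {..<k}) \<subseteq> w)" for \<sigma> i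
  have wsel: "wsel \<sigma> i \<in> W \<and> PiE {..<k} (restrict (\<lambda>j. Ur (\<sigma> j) i) {..<k}) \<subseteq> wsel \<sigma> i"
    if s: "\<sigma> \<in> PiE {..<k} (\<lambda>_. S1)" and i: "i \<in> {1..n}" for \<sigma> i
  proof -
    have "restrict (\<lambda>j. Ur (\<sigma> j) i) {..<k} \<in> PiE {..<k} (\<lambda>_. C)"
    proof (rule restrict_PiE_iff[THEN iffD2], intro ballI)
      fix j assume j: "j \<in> {..<k}"
      have "\<sigma> j \<in> S1" using PiE_mem[OF s j] .
      then show "Ur (\<sigma> j) i \<in> C" using Ur i by blast
    qed
    then have "\<exists>w. w \<in> W \<and> PiE {..<k} (restrict (\<lambda>j. Ur (\<sigma> j) i) {..<k}) \<subseteq> w"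
      using ref by blast
    then show ?thesis unfolding wsel_def by (rule someI_ex)
  qed
  define Qs where "Qs \<sigma> = topspace ?T \<inter> (\<Inter>i\<in>{1..n}. {x \<in> topspace ?T. nacomp (prod_maps k f) 0 (a i) x \<in> wsel \<sigma> i})" for \<sigma>
  have "Qs ` PiE {..<k} (\<lambda>_. S1) \<subseteq> ?D"
  proof
    fix Q assume "Q \<in> Qs ` PiE {..<k} (\<lambda>_. S1)"
    then obtain \<sigma> where s: "\<sigma> \<in> PiE {..<k} (\<lambda>_. S1)" "Q = Qs \<sigma>" by blast
    have "\<And>i. i \<in> {1..n} \<Longrightarrow> wsel \<sigma> i \<in> W" using wsel[OF s(1)] by blast
    then show "Q \<in> ?D" unfolding s(2) Qs_def by (rule join_intro)
  qed
  moreover have "finite (Qs ` PiE {..<k} (\<lambda>_. S1))" using S1(2) by (simp add: finite_PiE)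
  moreover have "topspace ?T \<subseteq> \<Union>(Qs ` PiE {..<k} (\<lambda>_. S1))"
  proof
    fix x assume xT: "x \<in> topspace ?T"
    then have xP: "x \<in> PiE {..<k} (\<lambda>_. X)" by simp
    have "\<forall>j\<in>{..<k}. \<exists>P\<in>S1. x j \<in> P"
    proof
      fix j assume j: "j \<in> {..<k}"
      have "x j \<in> topspace ?X1" using PiE_mem[OF xP j] by simp
      then show "\<exists>P\<in>S1. x j \<in> P" using S1(4) by blast
    qed
    then have "\<forall>j\<in>{..<k}. \<exists>P. P \<in> S1 \<and> x j \<in> P" by blast
    then obtain \<sigma>0 where s0: "\<forall>j\<in>{..<k}. \<sigma>0 j \<in> S1 \<and> x j \<in> \<sigma>0 j"
      by (rule bchoice[THEN exE]) blast
    define \<sigma> where "\<sigma> = restrict \<sigma>0 {..<k}"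
    have s: "\<sigma> \<in> PiE {..<k} (\<lambda>_. S1)" unfolding \<sigma>_def using s0 by simp
    have xext: "x \<in> extensional {..<k}" using xP PiE_iff by blast
    have "x \<in> Qs \<sigma>" unfolding Qs_def
    proof (intro IntI InterI)
      show "x \<in> topspace ?T" by (rule xT)
      fix Y assume "Y \<in> (\<lambda>i. {x \<in> topspace ?T. nacomp (prod_maps k f) 0 (a i) x \<in> wsel \<sigma> i}) ` {1..n}"
      then obtain i where i: "i \<in> {1..n}" "Y = {x \<in> topspace ?T. nacomp (prod_maps k f) 0 (a i) x \<in> wsel \<sigma> i}"
        by blast
      have "restrict (\<lambda>j. nacomp f 0 (a i) (x j)) {..<k} \<in> PiE {..<k} (restrict (\<lambda>j. Ur (\<sigma> j) i) {..<k})"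
      proof (rule restrict_PiE_iff[THEN iffD2], intro ballI)
        fix j assume j: "j \<in> {..<k}"
        have sj: "\<sigma> j = \<sigma>0 j" unfolding \<sigma>_def using j by simp
        have m: "\<sigma>0 j \<in> S1" "x j \<in> \<sigma>0 j" using s0 j by blast+
        have "x j \<in> topspace ?X1 \<inter> (\<Inter>i\<in>{1..n}. {x \<in> topspace ?X1. nacomp f 0 (a i) x \<in> Ur (\<sigma>0 j) i})"
          using m(2) Ur[OF m(1)] by simp
        then have "nacomp f 0 (a i) (x j) \<in> Ur (\<sigma>0 j) i" using i(1) by blast
        then show "nacomp f 0 (a i) (x j) \<in> restrict (\<lambda>j. Ur (\<sigma> j) i) {..<k} j" using j sj by simp
      qed
      then have "restrict (\<lambda>j. nacomp f 0 (a i) (x j)) {..<k} \<in> wsel \<sigma> i"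
        by (rule subsetD[OF conjunct2[OF wsel[OF s i(1)]]])
      then have "nacomp (prod_maps k f) 0 (a i) x \<in> wsel \<sigma> i"
        by (simp only: nacomp_prod[OF xext])
      then show "x \<in> Y" using i(2) xT by blast
    qed
    then show "x \<in> \<Union>(Qs ` PiE {..<k} (\<lambda>_. S1))" using s by blast
  qed
  ultimately have "NN ?T (prod_maps k f) a W n \<le> card (Qs ` PiE {..<k} (\<lambda>_. S1))"
    unfolding NN_def by (rule ms_le)
  also have "\<dots> \<le> card (PiE {..<k} (\<lambda>_. S1))" by (rule card_image_le) (simp add: S1(2) finite_PiE)
  also have "\<dots> = card S1 ^ k" by (simp add: card_PiE)
  finally show ?thesis using S1(3) by simp
qed


lemma se_eq:
  "seq_entropy T g a = (SUP C\<in>finite_open_covers T. limsup (\<lambda>n. ereal (ln (real (NN T g a C n)) / real n)))"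
  by (simp add: seq_entropy_def NN_def)

lemma ln_up:
  fixes p q n k :: nat
  assumes "q \<le> p ^ k" "k \<ge> 1"
  shows "ln (real q) / real n \<le> real k * (ln (real p) / real n)"
proof (cases "q = 0")
  case True
  have "0 \<le> ln (real p)" by (cases "p = 0") auto
  then show ?thesis using True by simp
next
  case False
  then have p: "p \<ge> 1" using assms by (cases "p = 0") (auto simp: power_0_left)
  have "real q \<le> real (p ^ k)" using assms(1) by (simp only: of_nat_le_iff)
  moreover have "0 < real q" using False by simp
  ultimately have "ln (real q) \<le> ln (real (p ^ k))" by (rule ln_mono)
  also have "\<dots> = real k * ln (real p)" by (simp add: ln_realpow)
  finally have "ln (real q) / real n \<le> real k * ln (real p) / real n" by (simp add: divide_right_mono)
  then show ?thesis by simp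
qed

lemma ln_down:
  fixes p q n k :: nat
  assumes "p ^ k \<le> q"
  shows "real k * (ln (real p) / real n) \<le> ln (real q) / real n"
proof (cases "p = 0")
  case True
  have "0 \<le> ln (real q)" by (cases "q = 0") auto
  then show ?thesis using True by simp
next
  case False
  then have "p ^ k \<ge> 1" by simp
  then have "real k * ln (real p) = ln (real (p ^ k))" by (simp add: ln_realpow)
  also have "\<dots> \<le> ln (real q)"
  proof (rule ln_mono)
    show "real (p ^ k) \<le> real q" using assms by (simp only: of_nat_le_iff)
    show "0 < real (p ^ k)" using \<open>p ^ k \<ge> 1\<close> by linarith
  qed
  finally have "real k * ln (real p) / real n \<le> ln (real q) / real n" by (simp add: divide_right_mono)
  then show ?thesis by simp
qed

lemma nonneg_ratio: "0 \<le> ln (real (q::nat)) / real n"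
proof -
  have "0 \<le> ln (real q)" by (cases "q = 0") auto
  then show ?thesis by simp
qed

theorem lemma3p5:
  fixes X :: "'a::metric_space set"
    and f :: "nat \<Rightarrow> 'a \<Rightarrow> 'a"
    and a :: "nat \<Rightarrow> nat"
    and k :: nat
  assumes "compact X"
    and "\<And>n. continuous_on X (f n)"
    and "\<And>n. f n ` X \<subseteq> X"
    and "strict_mono_on {1..} a"
    and "k \<ge> 1"
  shows "seq_entropy (product_topology (\<lambda>i. top_of_set X) {..<k}) (prod_maps k f) a
         = ereal (real k) * seq_entropy (top_of_set X) f a"
proof -
  note cX = assms(1) and fX = assms(3) and k = assms(5)
  let ?T1 = "top_of_set X"
  let ?T = "product_topology (\<lambda>i. top_of_set X) {..<k}"
  define v where "v C = (\<lambda>n. ereal (ln (real (NN ?T1 f a C n)) / real n))" for C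
  define v' where "v' W = (\<lambda>n. ereal (ln (real (NN ?T (prod_maps k f) a W n)) / real n))" for W
  have E1: "seq_entropy ?T1 f a = (SUP C\<in>finite_open_covers ?T1. limsup (v C))"
    unfolding se_eq v_def ..
  have E2: "seq_entropy ?T (prod_maps k f) a = (SUP W\<in>finite_open_covers ?T. limsup (v' W))"
    unfolding se_eq v'_def ..
  have kmul: "limsup (\<lambda>n. ereal (real k) * v C n) = ereal (real k) * limsup (v C)" for C
    by (rule Limsup_ereal_mult_left) simp_all
  have upper: "seq_entropy ?T (prod_maps k f) a \<le> ereal (real k) * seq_entropy ?T1 f a"
    unfolding E2
  proof (rule SUP_least)
    fix W assume W: "W \<in> finite_open_covers ?T"
    obtain C where C: "C \<in> finite_open_covers ?T1" "\<forall>V \<in> PiE {..<k} (\<lambda>_. C). \<exists>w\<in>W. PiE {..<k} V \<subseteq> w"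
      using refine_exists[OF cX k W] by blast
    have "limsup (v' W) \<le> limsup (\<lambda>n. ereal (real k) * v C n)"
    proof (rule Limsup_mono, rule always_eventually, rule allI)
      fix n
      have "NN ?T (prod_maps k f) a W n \<le> NN ?T1 f a C n ^ k"
        by (rule upper_count[OF fX C(1) C(2)])
      from ln_up[OF this k, of n] show "v' W n \<le> ereal (real k) * v C n"
        unfolding v_def v'_def by simp
    qed
    also have "\<dots> = ereal (real k) * limsup (v C)" by (rule kmul)
    also have "\<dots> \<le> ereal (real k) * seq_entropy ?T1 f a"
      unfolding E1 by (rule ereal_mult_left_mono) (rule SUP_upper[OF C(1)], simp)
    finally show "limsup (v' W) \<le> ereal (real k) * seq_entropy ?T1 f a" .
  qed
  have ne: "finite_open_covers ?T1 \<noteq> {}"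
  proof -
    have "{X} \<in> finite_open_covers ?T1" unfolding foc_sub by simp
    then show ?thesis by blast
  qed
  have pos: "0 \<le> limsup (v C)" for C
    by (rule le_Limsup) (simp_all add: v_def nonneg_ratio)
  have lower: "ereal (real k) * seq_entropy ?T1 f a \<le> seq_entropy ?T (prod_maps k f) a"
  proof -
    have "ereal (real k) * seq_entropy ?T1 f a = (SUP C\<in>finite_open_covers ?T1. ereal (real k) * limsup (v C))"
      unfolding E1 by (rule SUP_ereal_mult_left[symmetric]) (simp_all add: ne pos)
    also have "\<dots> \<le> seq_entropy ?T (prod_maps k f) a"
    proof (rule SUP_least)
      fix C assume C: "C \<in> finite_open_covers ?T1"
      obtain W where W: "W \<in> finite_open_covers ?T"
        "\<forall>n. NN ?T1 f a C n ^ k \<le> NN ?T (prod_maps k f) a W n"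
        using lower_main[where X=X and f=f and C=C and k=k and a=a, OF cX fX C] by blast
      have "ereal (real k) * limsup (v C) = limsup (\<lambda>n. ereal (real k) * v C n)" by (rule kmul[symmetric])
      also have "\<dots> \<le> limsup (v' W)"
      proof (rule Limsup_mono, rule always_eventually, rule allI)
        fix n
        from ln_down[OF spec[OF W(2), of n], of n] show "ereal (real k) * v C n \<le> v' W n"
          unfolding v_def v'_def by simp
      qed
      also have "\<dots> \<le> seq_entropy ?T (prod_maps k f) a"
        unfolding E2 by (rule SUP_upper[OF W(1)])
      finally show "ereal (real k) * limsup (v C) \<le> seq_entropy ?T (prod_maps k f) a" .
    qed
    finally show ?thesis .
  qed
  show ?thesis using upper lower by (rule antisym)
qed

end
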